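(* Let $F$ be an algebraically closed field of positive characteristic $p$, and let $\phi \in F(z)$ be a rational function with a single critical point $c \in \mathbb{P}^1(F)$. Then there exist polynomials $q_0, \ldots, q_n \in F[z]$ and a nonzero element $a \in F$ such that $\phi \circ \sigma(z) = [q_0(z^p), q_1(z^p), \ldots, q_n(z^p) + az]$, where $\sigma(z) = z$ if $c = \infty$ and $\sigma(z) = c + 1/z$ otherwise.
   Context: Continued fraction expansion: for $\psi \in F(z)$, repeated division gives unique polynomials $f_0, \ldots, f_n \in F[z]$, with $f_1, \ldots, f_n$ nonconstant, such that $\psi = f_0 + \cfrac{1}{f_1 + \cfrac{1}{\ddots + \cfrac{1}{f_n}}}$, written $\psi = [f_0, \ldots, f_n]$. Critical points: for $x \in F$, choose a fractional linear transformation $\tau$ over $F$ with $\tau(\phi(x)) \neq \infty$; $x$ is a critical point if $\frac{d(\tau\circ\phi)}{dz}(x) = 0$. The point $\infty$ is a critical point if $\frac{d(\tau \circ \phi(1/z))}{dz}\big|_{z=0} = 0$ for such $\tau$ with $\tau(\phi(\infty))\neq\infty$. These notions are independent of $\tau$. *)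

theory Defs
  imports "HOL-Computational_Algebra.Polynomial" "HOL-Computational_Algebra.Fraction_Field"
begin

text \<open>Rational functions F(z) are modelled as the fraction field of F[z]; points of
  the projective line P^1(F) as 'a option, with None the point at infinity.\<close>

type_synonym 'a ratfun = "'a poly fract"

definition rf_of_poly :: "'a::field poly \<Rightarrow> 'a ratfun" where
  "rf_of_poly f = Fract f 1"

definition rf_X :: "'a::field ratfun" where
  "rf_X = rf_of_poly [:0, 1:]"

definition rf_const :: "'a::field \<Rightarrow> 'a ratfun" where
  "rf_const c = rf_of_poly [:c:]"

definition rf_rep :: "'a::field ratfun \<Rightarrow> 'a poly \<times> 'a poly" where
  "rf_rep \<phi> = (SOME (P, Q). Q \<noteq> 0 \<and> coprime P Q \<and> \<phi> = Fract P Q)"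

definition rf_val :: "'a::field ratfun \<Rightarrow> 'a \<Rightarrow> 'a option" where
  "rf_val \<phi> x = (case rf_rep \<phi> of (P, Q) \<Rightarrow>
      if poly Q x = 0 then None else Some (poly P x / poly Q x))"

definition poly_at_rf :: "'a::field poly \<Rightarrow> 'a ratfun \<Rightarrow> 'a ratfun" where
  "poly_at_rf P s = poly (map_poly rf_const P) s"

definition rf_comp :: "'a::field ratfun \<Rightarrow> 'a ratfun \<Rightarrow> 'a ratfun" where
  "rf_comp \<phi> s = (case rf_rep \<phi> of (P, Q) \<Rightarrow> poly_at_rf P s / poly_at_rf Q s)"

fun rf_valP :: "'a::field ratfun \<Rightarrow> 'a option \<Rightarrow> 'a option" where
  "rf_valP \<phi> (Some x) = rf_val \<phi> x"
| "rf_valP \<phi> None = rf_val (rf_comp \<phi> (inverse rf_X)) 0"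

definition rf_deriv :: "'a::field ratfun \<Rightarrow> 'a ratfun" where
  "rf_deriv \<phi> = (case rf_rep \<phi> of (P, Q) \<Rightarrow>
      Fract (pderiv P * Q - P * pderiv Q) (Q ^ 2))"

definition flt :: "'a::field \<times> 'a \<times> 'a \<times> 'a \<Rightarrow> bool" where
  "flt t = (case t of (a, b, c, d) \<Rightarrow> a * d - b * c \<noteq> 0)"

fun flt_apply :: "'a::field \<times> 'a \<times> 'a \<times> 'a \<Rightarrow> 'a option \<Rightarrow> 'a option" where
  "flt_apply (a, b, c, d) (Some w) =
     (if c * w + d = 0 then None else Some ((a * w + b) / (c * w + d)))"
| "flt_apply (a, b, c, d) None = (if c = 0 then None else Some (a / c))"

fun flt_comp :: "'a::field \<times> 'a \<times> 'a \<times> 'a \<Rightarrow> 'a ratfun \<Rightarrow> 'a ratfun" where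
  "flt_comp (a, b, c, d) \<psi> =
     (rf_const a * \<psi> + rf_const b) / (rf_const c * \<psi> + rf_const d)"

fun critical_point :: "'a::field ratfun \<Rightarrow> 'a option \<Rightarrow> bool" where
  "critical_point \<phi> (Some x) =
     (\<exists>t. flt t \<and> flt_apply t (rf_val \<phi> x) \<noteq> None \<and>
          rf_val (rf_deriv (flt_comp t \<phi>)) x = Some 0)"
| "critical_point \<phi> None =
     (\<exists>t. flt t \<and> flt_apply t (rf_valP \<phi> None) \<noteq> None \<and>
          rf_val (rf_deriv (flt_comp t (rf_comp \<phi> (inverse rf_X)))) 0 = Some 0)"

text \<open>Continued fraction [f0, ..., fn] = f0 + 1/(f1 + 1/(... + 1/fn)).\<close>
fun contfrac :: "'a::field poly list \<Rightarrow> 'a ratfun" where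
  "contfrac [] = 0"
| "contfrac [f] = rf_of_poly f"
| "contfrac (f # g # fs) = rf_of_poly f + inverse (contfrac (g # fs))"

definition cf_expansion :: "'a::field poly list \<Rightarrow> bool" where
  "cf_expansion fs = (fs \<noteq> [] \<and> (\<forall>i \<in> {1..<length fs}. degree (fs ! i) > 0))"

end

theory Submission
  imports Defs
begin


definition wr :: "'a::field poly \<Rightarrow> 'a poly \<Rightarrow> 'a poly" where
  "wr P Q = pderiv P * Q - P * pderiv Q"

lemma rf_rep_ex: "\<exists>P Q. Q \<noteq> 0 \<and> coprime P Q \<and> (\<phi>::'a::field ratfun) = Fract P Q"
proof -
  define S where "S = {n. \<exists>P Q. Q \<noteq> 0 \<and> \<phi> = Fract P Q \<and> degree Q = n}"
  obtain a b where ab: "\<phi> = Fract a b" "b \<noteq> 0" by (cases \<phi>) 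
  have "degree b \<in> S" unfolding S_def using ab by blast
  define n where "n = (LEAST n. n \<in> S)"
  have nS: "n \<in> S" unfolding n_def by (rule LeastI) fact
  have nmin: "\<And>m. m \<in> S \<Longrightarrow> n \<le> m" unfolding n_def by (rule Least_le)
  from nS obtain P Q where PQ: "Q \<noteq> 0" "\<phi> = Fract P Q" "degree Q = n" unfolding S_def by blast
  have "coprime P Q"
  proof (rule coprimeI)
    fix c assume "c dvd P" "c dvd Q"
    then obtain P' Q' where e: "P = c * P'" "Q = c * Q'" by (meson dvdE)
    have c0: "c \<noteq> 0" and Q'0: "Q' \<noteq> 0" using PQ(1) e(2) by auto
    show "is_unit c"
    proof (rule ccontr)
      assume "\<not> is_unit c"
      then have "degree c > 0" using c0 is_unit_iff_degree by blast
      then have "degree Q' < degree Q" using e(2) c0 Q'0 by (simp add: degree_mult_eq)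
      moreover have "\<phi> = Fract P' Q'" using PQ(2) e c0 by (simp add: mult_fract_cancel)
      then have "degree Q' \<in> S" unfolding S_def using Q'0 by blast
      ultimately show False using nmin[of "degree Q'"] PQ(3) by simp
    qed
  qed
  then show ?thesis using PQ by blast
qed

lemma rf_rep_spec:
  obtains P Q where "rf_rep \<phi> = (P, Q)" "Q \<noteq> 0" "coprime P Q" "\<phi> = Fract P Q"
proof -
  from rf_rep_ex[of \<phi>] obtain P Q where h: "Q \<noteq> 0 \<and> coprime P Q \<and> \<phi> = Fract P Q" by blast
  have "(\<lambda>(P, Q). Q \<noteq> 0 \<and> coprime P Q \<and> \<phi> = Fract P Q) (P, Q)" unfolding case_prod_conv by (rule h)
  then have "(\<lambda>(P, Q). Q \<noteq> 0 \<and> coprime P Q \<and> \<phi> = Fract P Q) (rf_rep \<phi>)"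
    unfolding rf_rep_def by (rule someI)
  moreover obtain P0 Q0 where e: "rf_rep \<phi> = (P0, Q0)" by (cases "rf_rep \<phi>")
  ultimately have "Q0 \<noteq> 0 \<and> coprime P0 Q0 \<and> \<phi> = Fract P0 Q0" unfolding e case_prod_conv by blast
  then show ?thesis using that e by blast
qed

lemma rf_deriv_Fract:
  assumes "Q \<noteq> 0"
  shows "rf_deriv (Fract P Q) = Fract (wr P Q) (Q ^ 2)"
proof -
  obtain P0 Q0 where r: "rf_rep (Fract P Q) = (P0, Q0)" "Q0 \<noteq> 0" "Fract P Q = Fract P0 Q0"
    using rf_rep_spec[of "Fract P Q"] by metis
  have h: "P * Q0 = P0 * Q" using r assms by (simp add: eq_fract)
  have h': "pderiv P * Q0 + P * pderiv Q0 = pderiv P0 * Q + P0 * pderiv Q"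
    using arg_cong[OF h, of pderiv] by (simp add: pderiv_mult algebra_simps)
  have eq: "wr P0 Q0 * Q^2 = wr P Q * Q0^2"
    unfolding wr_def power2_eq_square using h h' by algebra
  moreover have "rf_deriv (Fract P Q) = Fract (wr P0 Q0) (Q0^2)"
    unfolding rf_deriv_def r(1) wr_def by simp
  moreover have "Fract (wr P0 Q0) (Q0^2) = Fract (wr P Q) (Q^2)"
  proof (rule iffD2[OF eq_fract(1)])
    show "Q0^2 \<noteq> 0" using r(2) by simp
    show "Q^2 \<noteq> 0" using assms by simp
    show "wr P0 Q0 * Q\<^sup>2 = wr P Q * Q0\<^sup>2" by (rule eq)
  qed
  ultimately show ?thesis by simp
qed

lemma coprime_not_both_zero:
  assumes "coprime P Q" shows "\<not> (poly P y = 0 \<and> poly Q (y::'a::field) = 0)"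
proof
  assume "poly P y = 0 \<and> poly Q y = 0"
  then have "[:-y,1:] dvd P" "[:-y,1:] dvd Q" by (simp_all add: poly_eq_0_iff_dvd)
  then have "is_unit [:-y,1:]" using assms coprime_common_divisor by blast
  then show False by (simp add: is_unit_iff_degree)
qed

lemma rf_val_Fract:
  assumes "B \<noteq> 0" "poly B y \<noteq> 0"
  shows "rf_val (Fract A B) y = Some (poly A y / poly B y)"
proof -
  obtain P0 Q0 where r: "rf_rep (Fract A B) = (P0, Q0)" "Q0 \<noteq> 0" "coprime P0 Q0" "Fract A B = Fract P0 Q0"
    using rf_rep_spec[of "Fract A B"] by metis
  have h: "A * Q0 = P0 * B" using r assms by (simp add: eq_fract)
  have e: "poly A y * poly Q0 y = poly P0 y * poly B y" using arg_cong[OF h, of "\<lambda>p. poly p y"] by simp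
  have "poly Q0 y \<noteq> 0"
  proof
    assume "poly Q0 y = 0"
    then have "poly P0 y = 0" using e assms by simp
    then show False using coprime_not_both_zero[OF r(3)] \<open>poly Q0 y = 0\<close> by blast
  qed
  then show ?thesis using r e assms unfolding rf_val_def by (simp add: field_simps)
qed

lemma rf_val_Fract_pole:
  assumes "B \<noteq> 0" "poly B y = 0" "poly A y \<noteq> 0"
  shows "rf_val (Fract A B) y = None"
proof -
  obtain P0 Q0 where r: "rf_rep (Fract A B) = (P0, Q0)" "Q0 \<noteq> 0" "coprime P0 Q0" "Fract A B = Fract P0 Q0"
    using rf_rep_spec[of "Fract A B"] by metis
  have h: "A * Q0 = P0 * B" using r assms by (simp add: eq_fract)
  have e: "poly A y * poly Q0 y = poly P0 y * poly B y" using arg_cong[OF h, of "\<lambda>p. poly p y"] by simp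
  have "poly Q0 y = 0" using e assms by simp
  then show ?thesis using r unfolding rf_val_def by simp
qed

lemma rf_const_0 [simp]: "rf_const 0 = 0" and rf_const_1 [simp]: "rf_const 1 = 1"
  by (simp_all add: rf_const_def rf_of_poly_def One_fract_def Zero_fract_def pCons_one)

lemma crit_finite:
  assumes "B \<noteq> 0" "\<not> (poly A y = 0 \<and> poly B y = 0)" "poly (wr A B) y = 0"
  shows "critical_point (Fract A B) (Some y)"
proof (cases "poly B y = 0")
  case False
  have f: "flt (1,0,0,1)" by (simp add: flt_def)
  have c: "flt_comp (1,0,0,1) (Fract A B) = Fract A B" by simp
  have v: "rf_val (Fract A B) y = Some (poly A y / poly B y)" using assms(1) False by (rule rf_val_Fract)
  have d: "rf_val (rf_deriv (Fract A B)) y = Some 0"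
    using assms False by (simp add: rf_deriv_Fract rf_val_Fract)
  have a: "flt_apply (1,0,0,1) (rf_val (Fract A B) y) \<noteq> None" by (simp add: v)
  show ?thesis unfolding critical_point.simps
    by (rule exI[of _ "(1,0,0,1)"]) (simp only: f c d a simp_thms)
next
  case True
  have A0: "A \<noteq> 0" using assms True by auto
  have f: "flt (0,1,1,0)" by (simp add: flt_def)
  have c: "flt_comp (0,1,1,0) (Fract A B) = Fract B A" by (simp add: divide_fract_def One_fract_def[symmetric])
  have w: "poly (wr B A) y = 0" using assms(3) by (simp add: wr_def algebra_simps)
  have v: "rf_val (Fract A B) y = None" using assms True by (intro rf_val_Fract_pole) auto
  have d: "rf_val (rf_deriv (Fract B A)) y = Some 0"
    using assms True A0 w by (simp add: rf_deriv_Fract rf_val_Fract)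
  have a: "flt_apply (0,1,1,0) (rf_val (Fract A B) y) \<noteq> None" by (simp add: v)
  show ?thesis unfolding critical_point.simps
    by (rule exI[of _ "(0,1,1,0)"]) (simp only: f c d a simp_thms)
qed

lemma crit_infty: "critical_point \<phi> None = critical_point (rf_comp \<phi> (inverse rf_X)) (Some 0)"
  by simp




definition R :: "nat \<Rightarrow> 'a::field poly \<Rightarrow> 'a poly" where
  "R d F = (\<Sum>i\<le>d. monom (coeff F i) (d - i))"

lemma coeff_R: "coeff (R d F) n = (if n \<le> d then coeff F (d - n) else 0)"
proof -
  have "coeff (R d F) n = (\<Sum>i\<le>d. if d - i = n then coeff F i else 0)"
    by (simp add: R_def coeff_sum coeff_monom)
  also have "\<dots> = (\<Sum>i\<le>d. if i = d - n \<and> n \<le> d then coeff F i else 0)"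
    by (rule sum.cong) auto
  also have "\<dots> = (if n \<le> d then coeff F (d - n) else 0)"
    by (cases "n \<le> d") (simp_all add: sum.delta)
  finally show ?thesis .
qed

lemma poly_sum_le:
  fixes p :: "'a::comm_semiring_1 poly"
  assumes "degree p \<le> d"
  shows "poly p x = (\<Sum>i\<le>d. coeff p i * x ^ i)"
proof -
  have "poly p x = (\<Sum>i\<le>degree p. coeff p i * x ^ i)" by (rule poly_altdef)
  also have "\<dots> = (\<Sum>i\<le>d. coeff p i * x ^ i)"
    using assms by (intro sum.mono_neutral_left) (auto simp: coeff_eq_0)
  finally show ?thesis .
qed

lemma poly_R:
  assumes "x \<noteq> 0" "degree F \<le> d"
  shows "poly (R d F) x = x ^ d * poly F (inverse x)"
proof -
  have "poly (R d F) x = (\<Sum>i\<le>d. coeff F i * x ^ (d - i))"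
    by (simp add: R_def poly_sum poly_monom)
  also have "\<dots> = (\<Sum>i\<le>d. x ^ d * (coeff F i * inverse x ^ i))"
    using assms(1) by (intro sum.cong) (auto simp: power_diff_conv_inverse)
  also have "\<dots> = x ^ d * poly F (inverse x)"
    by (simp add: sum_distrib_left poly_sum_le[OF assms(2)])
  finally show ?thesis .
qed

lemma R_deriv:
  assumes "degree F \<le> d"
  shows "pCons 0 (pderiv (R d F)) = smult (of_nat d) (R d F) - R d (pCons 0 (pderiv F))"
proof (rule poly_eqI)
  fix n
  show "coeff (pCons 0 (pderiv (R d F))) n = coeff (smult (of_nat d) (R d F) - R d (pCons 0 (pderiv F))) n"
  proof (cases n)
    case 0
    then show ?thesis using assms
      by (cases d) (auto simp: coeff_R coeff_pderiv coeff_pCons)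
  next
    case (Suc m)
    show ?thesis
    proof (cases "Suc m \<le> d")
      case False
      then show ?thesis using Suc by (simp add: coeff_R coeff_pderiv coeff_pCons)
    next
      case True
      then obtain j where j: "d = Suc m + j" by (metis le_add_diff_inverse)
      show ?thesis
      proof (cases j)
        case 0
        then show ?thesis using Suc j by (simp add: coeff_R coeff_pderiv coeff_pCons)
      next
        case (Suc j')
        have "d - Suc m = Suc j'" using j Suc by simp
        then show ?thesis using \<open>n = Suc m\<close> j True
          by (simp add: coeff_R coeff_pderiv coeff_pCons algebra_simps)
      qed
    qed
  qed
qed




lemma rf_const_add: "rf_const (a + b) = rf_const a + rf_const (b::'a::field)"
  by (simp add: rf_const_def rf_of_poly_def)
lemma rf_const_mult: "rf_const (a * b) = rf_const a * rf_const (b::'a::field)"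
  by (simp add: rf_const_def rf_of_poly_def ac_simps)

lemma poly_at_rf_0 [simp]: "poly_at_rf 0 s = 0"
  by (simp add: poly_at_rf_def)

lemma poly_at_rf_pCons: "poly_at_rf (pCons a F) s = rf_const a + s * poly_at_rf F s"
  by (simp add: poly_at_rf_def map_poly_pCons)

lemma poly_at_rf_const: "poly_at_rf [:a:] s = rf_const a"
  by (simp add: poly_at_rf_def map_poly_pCons)

lemma poly_at_rf_add: "poly_at_rf (p + q) s = poly_at_rf p s + poly_at_rf q s"
proof -
  have "map_poly rf_const (p + q) = map_poly rf_const p + map_poly rf_const q"
    by (intro poly_eqI) (simp add: coeff_map_poly rf_const_add)
  then show ?thesis by (simp add: poly_at_rf_def)
qed

lemma poly_at_rf_smult: "poly_at_rf (smult a q) s = rf_const a * poly_at_rf q s"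
  by (simp add: poly_at_rf_def map_poly_smult rf_const_mult)

lemma poly_at_rf_mult: "poly_at_rf (p * q) s = poly_at_rf p s * poly_at_rf q s"
proof (induction p rule: pCons_induct)
  case 0 then show ?case by (simp add: poly_at_rf_def)
next
  case (pCons a p)
  have "poly_at_rf (pCons a p * q) s = poly_at_rf (smult a q + pCons 0 (p * q)) s" by simp
  also have "\<dots> = rf_const a * poly_at_rf q s + s * poly_at_rf (p * q) s"
    by (simp add: poly_at_rf_add poly_at_rf_smult poly_at_rf_pCons)
  also have "\<dots> = poly_at_rf (pCons a p) s * poly_at_rf q s"
    using pCons.IH by (simp add: poly_at_rf_pCons algebra_simps)
  finally show ?case .
qed

lemma poly_at_rf_shift:
  "poly_at_rf F (rf_const c + s) = poly_at_rf (pcompose F [:c, 1:]) s"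
proof (induction F rule: pCons_induct)
  case 0 then show ?case by (simp add: poly_at_rf_def)
next
  case (pCons a F)
  have T: "poly_at_rf [:c, 1:] s = rf_const c + s"
    by (simp add: poly_at_rf_pCons poly_at_rf_const)
  have "poly_at_rf (pcompose (pCons a F) [:c,1:]) s = rf_const a + (rf_const c + s) * poly_at_rf (pcompose F [:c,1:]) s"
    by (simp only: pcompose_pCons poly_at_rf_add poly_at_rf_mult poly_at_rf_const T)
  then show ?case by (simp only: poly_at_rf_pCons pCons.IH)
qed

lemma poly_at_rf_X: "poly_at_rf F rf_X = Fract F 1"
proof (induction F rule: pCons_induct)
  case 0 then show ?case by (simp add: poly_at_rf_def Zero_fract_def)
next
  case (pCons a F)
  have IH: "poly_at_rf F (Fract [:0, 1:] 1) = Fract F 1" using pCons.IH by (simp add: rf_X_def rf_of_poly_def)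
  have "pCons a F = [:a:] + [:0, 1:] * F" by (simp add: mult_pCons_left)
  then show ?case
    by (simp add: poly_at_rf_pCons IH rf_X_def rf_of_poly_def rf_const_def)
qed

lemma Fract_power: "Fract a b ^ n = Fract (a ^ n) (b ^ n)"
  by (induction n) (simp_all add: One_fract_def)

lemma sum_Fract:
  assumes "D \<noteq> 0"
  shows "(\<Sum>i\<in>A. Fract (f i) D) = Fract (\<Sum>i\<in>A. f i) D"
proof (induction A rule: infinite_finite_induct)
  case (infinite A) then show ?case by (simp add: fract_collapse)
next
  case empty then show ?case by (simp add: fract_collapse)
next
  case (insert x F)
  then show ?case using assms
    by (simp add: eq_fract algebra_simps)
qed

lemma poly_at_rf_inv:
  assumes "degree G \<le> d"
  shows "poly_at_rf G (inverse rf_X) = Fract (R d G) (monom 1 d)"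
proof -
  have deg: "degree (map_poly rf_const G) \<le> d"
    using assms map_poly_degree_leq order.trans by blast
  have X: "[:0, 1:] ^ i = (monom 1 i :: 'a poly)" for i
    by (simp add: monom_altdef)
  have "poly_at_rf G (inverse rf_X) = (\<Sum>i\<le>d. rf_const (coeff G i) * inverse rf_X ^ i)"
    unfolding poly_at_rf_def by (simp add: poly_sum_le[OF deg] coeff_map_poly)
  also have "\<dots> = (\<Sum>i\<le>d. Fract (monom (coeff G i) (d - i)) (monom 1 d))"
  proof (rule sum.cong)
    fix i assume "i \<in> {..d}"
    then have id: "i \<le> d" by simp
    have "rf_const (coeff G i) * inverse rf_X ^ i = Fract [:coeff G i:] (monom 1 i)"
      by (simp add: rf_const_def rf_of_poly_def rf_X_def Fract_power X)
    also have "\<dots> = Fract (monom (coeff G i) (d - i)) (monom 1 d)"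
    proof (rule iffD2[OF eq_fract(1)])
      show "monom 1 i \<noteq> (0 :: 'a poly)" "monom 1 d \<noteq> (0 :: 'a poly)" by simp_all
      show "[:coeff G i:] * monom 1 d = monom (coeff G i) (d - i) * monom 1 i"
        using id by (simp add: mult_monom monom_altdef power_add[symmetric])
    qed
    finally show "rf_const (coeff G i) * inverse rf_X ^ i = Fract (monom (coeff G i) (d - i)) (monom 1 d)" .
  qed simp
  also have "\<dots> = Fract (R d G) (monom 1 d)"
    by (simp add: sum_Fract R_def)
  finally show ?thesis .
qed




lemma rf_comp_X: "rf_comp \<phi> rf_X = \<phi>"
proof -
  obtain P Q where r: "rf_rep \<phi> = (P, Q)" "Q \<noteq> 0" "\<phi> = Fract P Q" by (rule rf_rep_spec)
  have "rf_comp \<phi> rf_X = Fract P 1 / Fract Q 1" unfolding rf_comp_def r(1) by (simp add: poly_at_rf_X)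
  also have "\<dots> = Fract P Q" by simp
  finally show ?thesis using r(3) by simp
qed

lemma R_nonzero:
  assumes "F \<noteq> 0" "degree F \<le> d"
  shows "R d F \<noteq> 0"
proof -
  have "coeff (R d F) (d - degree F) = lead_coeff F" using assms by (simp add: coeff_R)
  then show ?thesis using assms by auto
qed

lemma rf_comp_sigma:
  assumes r: "rf_rep \<phi> = (P, Q)" "Q \<noteq> 0"
    and d: "degree P \<le> d" "degree Q \<le> d"
  shows "rf_comp \<phi> (rf_const c + inverse rf_X) =
           Fract (R d (pcompose P [:c, 1:])) (R d (pcompose Q [:c, 1:]))"
proof -
  have dP: "degree (pcompose P [:c, 1:]) \<le> d" using d by (simp add: degree_pcompose)
  have dQ: "degree (pcompose Q [:c, 1:]) \<le> d" using d by (simp add: degree_pcompose)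
  have "rf_comp \<phi> (rf_const c + inverse rf_X) =
    Fract (R d (pcompose P [:c, 1:])) (monom 1 d) / Fract (R d (pcompose Q [:c, 1:])) (monom 1 d)"
    unfolding rf_comp_def r(1) by (simp add: poly_at_rf_shift poly_at_rf_inv[OF dP] poly_at_rf_inv[OF dQ])
  also have "\<dots> = Fract (monom 1 d * R d (pcompose P [:c, 1:])) (monom 1 d * R d (pcompose Q [:c, 1:]))"
    by (simp add: ac_simps)
  also have "\<dots> = Fract (R d (pcompose P [:c, 1:])) (R d (pcompose Q [:c, 1:]))"
    by (rule mult_fract_cancel) simp
  finally show ?thesis .
qed

lemma degree_pCons_pderiv: "degree (pCons 0 (pderiv F)) \<le> degree F"
proof (rule degree_le, intro allI impI)
  fix i assume "degree F < i"
  then show "coeff (pCons 0 (pderiv F)) i = 0"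
    by (cases i) (auto simp: coeff_pderiv coeff_eq_0)
qed

lemma wr_R_zero:
  fixes x :: "'a::field"
  assumes "x \<noteq> 0" "degree F \<le> d" "degree G \<le> d" "poly (wr (R d F) (R d G)) x = 0"
  shows "poly (wr F G) (inverse x) = 0"
proof -
  let ?u = "inverse x"
  have e: "x * poly (pderiv (R d H)) x = of_nat d * (x ^ d * poly H ?u) - x ^ d * (?u * poly (pderiv H) ?u)"
    if "degree H \<le> d" for H
  proof -
    have "poly (pCons 0 (pderiv (R d H))) x = poly (smult (of_nat d) (R d H) - R d (pCons 0 (pderiv H))) x"
      by (simp only: R_deriv[OF that])
    then show ?thesis
      using assms(1) that degree_pCons_pderiv[of H] order.trans
      by (simp add: poly_R)
  qed
  have hF: "poly (R d F) x = x ^ d * poly F ?u" using assms by (simp add: poly_R)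
  have hG: "poly (R d G) x = x ^ d * poly G ?u" using assms by (simp add: poly_R)
  have "x * poly (wr (R d F) (R d G)) x =
     (x * poly (pderiv (R d F)) x) * poly (R d G) x - poly (R d F) x * (x * poly (pderiv (R d G)) x)"
    by (simp add: wr_def algebra_simps)
  also have "\<dots> = - (x ^ d * x ^ d * ?u) * poly (wr F G) ?u"
    unfolding e[OF assms(2)] e[OF assms(3)] hF hG by (simp add: wr_def algebra_simps)
  finally have "(x ^ d * x ^ d * ?u) * poly (wr F G) ?u = 0" using assms(4) by simp
  then show ?thesis using assms(1) by simp
qed

lemma wr_shift: "poly (wr (pcompose P [:c, 1:]) (pcompose Q [:c, 1:])) u = poly (wr P Q) (c + u)"
  by (simp add: wr_def pderiv_pcompose poly_pcompose pderiv_pCons)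

lemma wr_R_at_0:
  assumes "d = Suc m"
  shows "poly (wr (R d F) (R d G)) 0 = coeff F m * coeff G d - coeff F d * coeff G m"
  using assms by (simp add: wr_def poly_0_coeff_0 coeff_mult_0 coeff_pderiv coeff_R)

lemma coeff_shift:
  fixes F :: "'a::field poly"
  shows   "degree F \<le> Suc m \<Longrightarrow> coeff (pcompose F [:c, 1:]) (Suc m) = coeff F (Suc m) \<and>
     coeff (pcompose F [:c, 1:]) m = coeff F m + of_nat (Suc m) * c * coeff F (Suc m)"
proof (induction F arbitrary: m rule: pCons_induct)
  case 0 then show ?case by simp
next
  case (pCons a F)
  let ?G = "pcompose F [:c, 1:]"
  have cG: "coeff (pcompose (pCons a F) [:c, 1:]) n = (if n = 0 then a else 0) + c * coeff ?G n + (if n = 0 then 0 else coeff ?G (n - 1))" for n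
    by (simp add: pcompose_pCons mult_pCons_left coeff_pCons split: nat.split)
  have dF: "degree F \<le> m" using pCons.prems pCons.hyps by (cases "F = 0") auto
  have dG: "degree ?G \<le> m" using dF by (simp add: degree_pcompose)
  have G0: "coeff ?G (Suc m) = 0" using dG by (simp add: coeff_eq_0)
  show ?case
  proof (cases m)
    case 0
    then obtain f where F: "F = [:f:]" using dF by (metis degree_eq_zeroE le_zero_eq)
    show ?thesis using 0 F by (simp add: cG pcompose_pCons)
  next
    case (Suc m')
    have IH: "coeff ?G (Suc m') = coeff F (Suc m') \<and>
       coeff ?G m' = coeff F m' + of_nat (Suc m') * c * coeff F (Suc m')"
      using pCons.IH dF Suc by blast
    show ?thesis using IH G0 Suc by (simp add: cG algebra_simps)
  qed
qed




lemma pcompose_X_power: "pcompose ([:0, 1:] ^ j) r = (r::'a::field poly) ^ j"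
  by (induction j) (simp_all add: pcompose_mult pcompose_pCons pcompose_1)

lemma pcompose_monom_monom: "pcompose (monom (a::'a::field) j) (monom 1 p) = monom a (p * j)"
proof -
  have "monom a j = smult a ([:0,1:]^j)" by (rule monom_altdef)
  then have "pcompose (monom a j) (monom 1 p) = smult a (monom 1 p ^ j)"
    by (simp add: pcompose_smult pcompose_X_power)
  also have "\<dots> = monom a (p * j)" by (simp add: monom_power smult_monom mult.commute)
  finally show ?thesis .
qed

lemma pderiv_zero_char:
  fixes f :: "'a::field poly"
  assumes "pderiv f = 0" "CHAR('a) = p" "p > 0"
  shows "\<exists>q. f = pcompose q (monom 1 p)"
proof -
  define q where "q = (\<Sum>j\<le>degree f. monom (coeff f (p * j)) j)"
  have "pcompose q (monom 1 p) = (\<Sum>j\<le>degree f. monom (coeff f (p * j)) (p * j))"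
    by (simp add: q_def pcompose_sum pcompose_monom_monom)
  also have "\<dots> = f"
  proof (rule poly_eqI)
    fix n
    have cz: "coeff f n = 0" if "\<not> p dvd n" for n
    proof -
      have n0: "n \<noteq> 0" using that by (metis dvd_0_right)
      have "coeff (pderiv f) (n - 1) = of_nat n * coeff f n"
        using n0 by (simp add: coeff_pderiv)
      moreover have "of_nat n \<noteq> (0::'a)" using that assms(2) by (simp add: of_nat_eq_0_iff_char_dvd)
      ultimately show ?thesis using assms(1) by simp
    qed
    have "coeff (\<Sum>j\<le>degree f. monom (coeff f (p * j)) (p * j)) n =
          (\<Sum>j\<le>degree f. if p * j = n then coeff f (p * j) else 0)"
      by (simp add: coeff_sum coeff_monom)
    also have "\<dots> = coeff f n"
    proof (cases "p dvd n")
      case True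
      then obtain k where k: "n = p * k" by (auto elim: dvdE)
      have "(\<Sum>j\<le>degree f. if p * j = n then coeff f (p * j) else 0) =
            (\<Sum>j\<le>degree f. if j = k then coeff f n else 0)"
        using assms(3) k by (intro sum.cong) auto
      also have "\<dots> = coeff f n"
      proof (cases "k \<le> degree f")
        case False
        have "k \<le> n" using k assms(3) by (cases p) auto
        then have "degree f < n" using False by linarith
        then show ?thesis using False by (simp add: coeff_eq_0)
      qed simp
      finally show ?thesis .
    next
      case False
      then have "(\<Sum>j\<le>degree f. if p * j = n then coeff f (p * j) else 0) = 0"
        by (intro sum.neutral) auto
      then show ?thesis using cz[OF False] by simp
    qed
    finally show "coeff (\<Sum>j\<le>degree f. monom (coeff f (p * j)) (p * j)) n = coeff f n" .
  qed
  finally show ?thesis by metis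
qed




definition mkfs :: "nat \<Rightarrow> 'a::field poly list \<Rightarrow> 'a poly \<Rightarrow> 'a \<Rightarrow> 'a poly list" where
  "mkfs p qs qn a = map (\<lambda>q. pcompose q (monom 1 p)) qs @ [pcompose qn (monom 1 p) + [:0, a:]]"

lemma mkfs_Cons: "mkfs p (q # qs) qn a = pcompose q (monom 1 p) # mkfs p qs qn a"
  by (simp add: mkfs_def)

lemma mkfs_ne: "mkfs p qs qn a \<noteq> []"
  by (simp add: mkfs_def)

lemma degree_pderiv_le: "degree (pderiv p) \<le> degree p"
proof (rule degree_le, intro allI impI)
  fix i assume "degree p < i"
  then show "coeff (pderiv p) i = 0" by (simp add: coeff_pderiv coeff_eq_0)
qed

lemma wr_const_root_free:
  fixes W :: "'a::alg_closed_field poly"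
  assumes "\<forall>x. poly W x \<noteq> 0"
  shows "degree W = 0" "W \<noteq> 0"
proof -
  show "degree W = 0" using alg_closed_imp_poly_has_root assms by blast
  show "W \<noteq> 0" using assms by auto
qed

lemma euclid:
  fixes A B :: "'a::alg_closed_field poly"
  assumes "CHAR('a) = p" "p > 0" "B \<noteq> 0" "\<forall>x. poly (wr A B) x \<noteq> 0"
  shows "\<exists>qs qn a. a \<noteq> 0 \<and> cf_expansion (mkfs p qs qn a) \<and> Fract A B = contfrac (mkfs p qs qn a)
            \<and> (degree B < degree A \<longrightarrow> 0 < degree (hd (mkfs p qs qn a)))"
  using assms(3,4)
proof (induction "degree B" arbitrary: A B rule: less_induct)
  case less
  have Wd: "degree (wr A B) = 0" and W0: "wr A B \<noteq> 0"
    using wr_const_root_free less.prems(2) by blast+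
  show ?case
  proof (cases "degree B = 0")
    case True
    then obtain b where b: "B = [:b:]" by (metis degree_eq_zeroE)
    have b0: "b \<noteq> 0" using less.prems(1) b by simp
    have wAB: "wr A B = smult b (pderiv A)" by (simp add: wr_def b)
    define A2 where "A2 = smult (inverse b) A"
    have dA2: "pderiv A2 = smult (inverse b) (pderiv A)" by (simp add: A2_def pderiv_smult)
    have "degree (pderiv A2) = 0" using Wd b0 by (simp add: dA2 wAB)
    then obtain a where a: "pderiv A2 = [:a:]" by (metis degree_eq_zeroE)
    have a0: "a \<noteq> 0" using W0 a b0 by (auto simp: wAB dA2)
    have "pderiv (A2 - [:0, a:]) = 0" by (simp add: a pderiv_diff pderiv_pCons)
    then obtain qn where qn: "A2 - [:0, a:] = pcompose qn (monom 1 p)"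
      using pderiv_zero_char assms(1,2) by blast
    have fs: "mkfs p [] qn a = [A2]" using qn by (simp add: mkfs_def algebra_simps)
    have "Fract A B = Fract A2 1"
      using b0 by (simp add: eq_fract b A2_def)
    moreover have "degree A2 = degree A" using b0 by (simp add: A2_def)
    ultimately show ?thesis using a0 True
      by (intro exI[of _ "[]"] exI[of _ qn] exI[of _ a])
         (simp add: fs cf_expansion_def rf_of_poly_def)
  next
    case False
    define f where "f = A div B"
    define r where "r = A mod B"
    have Adec: "A = f * B + r" by (simp add: f_def r_def)
    have wsplit: "wr A B = pderiv f * B * B + wr r B"
      by (simp add: Adec wr_def pderiv_mult pderiv_add algebra_simps)
    have dr: "degree (wr r B) < 2 * degree B"
    proof (cases "r = 0")
      case True then show ?thesis using False by (simp add: wr_def)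
    next
      case r0: False
      have rB: "degree r < degree B" using degree_mod_less'[OF less.prems(1)] r0 by (simp add: r_def)
      have "degree (pderiv r * B) < 2 * degree B"
        using degree_mult_le[of "pderiv r" B] degree_pderiv_le[of r] rB by linarith
      moreover have "degree (r * pderiv B) < 2 * degree B"
        using degree_mult_le[of r "pderiv B"] degree_pderiv_le[of B] rB by linarith
      ultimately show ?thesis unfolding wr_def by (meson degree_diff_less)
    qed
    have f': "pderiv f = 0"
    proof (rule ccontr)
      assume nz: "pderiv f \<noteq> 0"
      have "degree (pderiv f * B * B) = degree (pderiv f) + degree B + degree B"
        using nz less.prems(1) by (simp add: degree_mult_eq)
      then have "degree (wr r B) < degree (pderiv f * B * B)" using dr by linarith
      then have "degree (wr A B) = degree (pderiv f * B * B)"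
        unfolding wsplit by (rule degree_add_eq_left)
      then show False using Wd False
        \<open>degree (pderiv f * B * B) = degree (pderiv f) + degree B + degree B\<close> by linarith
    qed
    then obtain q0 where q0: "f = pcompose q0 (monom 1 p)" using pderiv_zero_char assms(1,2) by blast
    have wrB: "wr r B = wr A B" using wsplit f' by simp
    have r0: "r \<noteq> 0" using W0 wrB by (auto simp: wr_def)
    have rB: "degree r < degree B" using degree_mod_less'[OF less.prems(1)] r0 by (simp add: r_def)
    have "wr B r = - wr r B" by (simp add: wr_def algebra_simps)
    then have "wr B r = - wr A B" using wrB by simp
    then have wBr: "\<forall>x. poly (wr B r) x \<noteq> 0"
      using less.prems(2) by simp
    obtain qs qn a where IH: "a \<noteq> 0" "cf_expansion (mkfs p qs qn a)" "Fract B r = contfrac (mkfs p qs qn a)"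
       "0 < degree (hd (mkfs p qs qn a))"
      using less.hyps[OF rB r0 wBr] rB by blast
    obtain g gs where ggs: "mkfs p qs qn a = g # gs" using mkfs_ne by (metis list.exhaust)
    have fs: "mkfs p (q0 # qs) qn a = f # g # gs" by (simp add: mkfs_Cons q0 ggs)
    have val: "Fract A B = contfrac (mkfs p (q0 # qs) qn a)"
    proof -
      have "contfrac (mkfs p (q0 # qs) qn a) = Fract f 1 + inverse (Fract B r)"
        using IH(3) by (simp add: fs ggs rf_of_poly_def)
      also have "\<dots> = Fract A B" using less.prems(1) r0 by (simp add: eq_fract Adec algebra_simps)
      finally show ?thesis by simp
    qed
    have cf: "cf_expansion (mkfs p (q0 # qs) qn a)"
      unfolding cf_expansion_def
    proof (intro conjI ballI)
      show "mkfs p (q0 # qs) qn a \<noteq> []" by (rule mkfs_ne)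
    next
      fix i assume i: "i \<in> {1..<length (mkfs p (q0 # qs) qn a)}"
      then obtain j where j: "i = Suc j" by (cases i) auto
      show "0 < degree (mkfs p (q0 # qs) qn a ! i)"
      proof (cases j)
        case 0 then show ?thesis using IH(4) j by (simp add: fs ggs)
      next
        case (Suc j')
        then have "j \<in> {1..<length (mkfs p qs qn a)}" using i j by (simp add: fs ggs)
        then have "0 < degree (mkfs p qs qn a ! j)" using IH(2) by (simp add: cf_expansion_def)
        then show ?thesis using j by (simp add: fs ggs)
      qed
    qed
    have hd: "0 < degree (hd (mkfs p (q0 # qs) qn a))" if "degree B < degree A"
    proof (rule ccontr)
      assume "\<not> 0 < degree (hd (mkfs p (q0 # qs) qn a))"
      then have "degree f = 0" by (simp add: fs)
      then have "degree (f * B) \<le> degree B" using degree_mult_le[of f B] by simp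
      then have "degree A \<le> degree B" unfolding Adec using rB
        by (meson degree_add_le less_imp_le_nat)
      then show False using that by simp
    qed
    show ?thesis using IH(1) val cf hd by blast
  qed
qed




theorem corollary1p2:
  fixes \<phi> :: "'a::alg_closed_field ratfun" and c :: "'a option" and p :: nat
  assumes "p = CHAR('a)" and "p > 0"
    and "{x. critical_point \<phi> x} = {c}"
  shows "\<exists>(qs :: 'a poly list) (qn :: 'a poly) (a :: 'a). a \<noteq> 0 \<and>
    (let \<sigma> = (case c of None \<Rightarrow> rf_X | Some c' \<Rightarrow> rf_const c' + inverse rf_X);
         fs = map (\<lambda>q. pcompose q (monom 1 p)) qs @ [pcompose qn (monom 1 p) + [:0, a:]]
     in cf_expansion fs \<and> rf_comp \<phi> \<sigma> = contfrac fs)"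
proof -
  obtain P Q where r: "rf_rep \<phi> = (P, Q)" "Q \<noteq> 0" "coprime P Q" "\<phi> = Fract P Q"
    by (rule rf_rep_spec)
  have crit: "x = c" if "critical_point \<phi> x" for x
    using assms(3) that by blast
  have fin: "critical_point \<phi> (Some y)" if "poly (wr P Q) y = 0" for y
    unfolding r(4) using r(2) coprime_not_both_zero[OF r(3)] that by (rule crit_finite)
  have char: "CHAR('a) = p" using assms(1) by simp
  have main: "rf_comp \<phi> (case c of None \<Rightarrow> rf_X | Some c' \<Rightarrow> rf_const c' + inverse rf_X) = Fract A B
     \<Longrightarrow> B \<noteq> 0 \<Longrightarrow> \<forall>x. poly (wr A B) x \<noteq> 0 \<Longrightarrow> ?thesis" for A B
  proof -
    assume e: "rf_comp \<phi> (case c of None \<Rightarrow> rf_X | Some c' \<Rightarrow> rf_const c' + inverse rf_X) = Fract A B"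
      and B0: "B \<noteq> 0" and W: "\<forall>x. poly (wr A B) x \<noteq> 0"
    obtain qs qn a where "a \<noteq> 0" "cf_expansion (mkfs p qs qn a)" "Fract A B = contfrac (mkfs p qs qn a)"
      using euclid[OF char assms(2) B0 W] by blast
    then show ?thesis unfolding Let_def e mkfs_def by blast
  qed
  show ?thesis
  proof (cases c)
    case None
    have W: "\<forall>x. poly (wr P Q) x \<noteq> 0" using fin crit None by blast
    show ?thesis by (rule main[OF _ r(2) W]) (simp add: None rf_comp_X r(4))
  next
    case (Some c')
    define d where "d = max (degree P) (degree Q)"
    have dP: "degree P \<le> d" and dQ: "degree Q \<le> d" by (simp_all add: d_def)
    have "d \<noteq> 0"
    proof
      assume "d = 0"
      then have "degree P = 0" "degree Q = 0" using dP dQ by simp_all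
      then have "pderiv P = 0" "pderiv Q = 0" by (auto elim!: degree_eq_zeroE)
      then have "wr P Q = 0" by (simp add: wr_def)
      then have "Some 0 = c" "Some 1 = c" using fin crit by auto
      then show False by (metis option.inject zero_neq_one)
    qed
    then obtain m where m: "d = Suc m" by (cases d) auto
    let ?T = "[:c', 1:]"
    have dPT: "degree (pcompose P ?T) \<le> d" and dQT: "degree (pcompose Q ?T) \<le> d"
      using dP dQ by (simp_all add: degree_pcompose)
    have QT0: "pcompose Q ?T \<noteq> 0" using r(2) pcompose_eq_0 by fastforce
    have B0: "R d (pcompose Q ?T) \<noteq> 0" by (rule R_nonzero[OF QT0 dQT])
    have e: "rf_comp \<phi> (rf_const c' + inverse rf_X) = Fract (R d (pcompose P ?T)) (R d (pcompose Q ?T))"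
      by (rule rf_comp_sigma[OF r(1,2) dP dQ])
    have W: "\<forall>x. poly (wr (R d (pcompose P ?T)) (R d (pcompose Q ?T))) x \<noteq> 0"
    proof
      fix x
      show "poly (wr (R d (pcompose P ?T)) (R d (pcompose Q ?T))) x \<noteq> 0"
      proof (cases "x = 0")
        case False
        show ?thesis
        proof
          assume "poly (wr (R d (pcompose P ?T)) (R d (pcompose Q ?T))) x = 0"
          then have "poly (wr (pcompose P ?T) (pcompose Q ?T)) (inverse x) = 0"
            using wr_R_zero[OF False dPT dQT] by blast
          then have "poly (wr P Q) (c' + inverse x) = 0" by (simp add: wr_shift)
          then have "Some (c' + inverse x) = c" using fin crit by blast
          then show False using Some False by simp
        qed
      next
        case True
        have cs: "poly (wr (R d (pcompose P ?T)) (R d (pcompose Q ?T))) 0 = poly (wr (R d P) (R d Q)) 0"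
          using coeff_shift[of P m c'] coeff_shift[of Q m c'] dP dQ m
          by (simp add: wr_R_at_0 algebra_simps)
        have RQ0: "R d Q \<noteq> 0" by (rule R_nonzero[OF r(2) dQ])
        have nb: "\<not> (poly (R d P) 0 = 0 \<and> poly (R d Q) 0 = 0)"
        proof
          assume h: "poly (R d P) 0 = 0 \<and> poly (R d Q) 0 = 0"
          then have "coeff P d = 0" "coeff Q d = 0" by (simp_all add: poly_0_coeff_0 coeff_R)
          moreover have "d = degree P \<or> d = degree Q" by (simp add: d_def max_def)
          ultimately show False using r(2) \<open>d \<noteq> 0\<close> by auto
        qed
        have einf: "rf_comp \<phi> (inverse rf_X) = Fract (R d P) (R d Q)"
          using rf_comp_sigma[OF r(1,2) dP dQ, of 0] by simp
        show ?thesis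
        proof
          assume "poly (wr (R d (pcompose P ?T)) (R d (pcompose Q ?T))) x = 0"
          then have "poly (wr (R d P) (R d Q)) 0 = 0" using True cs by simp
          then have "critical_point (Fract (R d P) (R d Q)) (Some 0)"
            by (rule crit_finite[OF RQ0 nb])
          then have "critical_point \<phi> None" by (simp only: crit_infty einf)
          then show False using crit Some by blast
        qed
      qed
    qed
    show ?thesis by (rule main[OF _ B0 W]) (simp add: Some e)
  qed
qed


end
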